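(* Let $Q=\sum_{j=1}^n q_j(z)\partial/\partial z_j$ be a weighted homogeneous holomorphic polynomial vector field on $\mathbb{C}^n$ with $Q(0)=0$, and suppose $S$ is a nontrivial orbit of $Q$ with $0\in\bar S$ and $Q\neq0$ on $S$. Let $\nu$ be a real number and $\alpha$ a positive integer. If $Q^\alpha p^{(\nu)}=0$ on $\mathbb{C}^n$, then $p^{(\nu)}|_S=0$.
   Context: Weights $\delta_j=1/(2m_j)$ ($m_j$ positive integers) on $z_1,\dots,z_n$; $\mathrm{wt}(z^J)=\sum j_k\delta_k$, $\mathrm{wt}(z^A\bar z^B)=\mathrm{wt}\,A+\mathrm{wt}\,B$; a polynomial or vector field is homogeneous of weight $\mu$ if all monomials of the polynomial (resp. of $q_j$) have weight $\mu$ (resp. $\mu-\delta_j$). Standing assumption: $p(z,\bar z)=\sum c_{A,B}z^A\bar z^B$ is a real polynomial, homogeneous of weight 1, containing no purely holomorphic or purely antiholomorphic monomials ($c_{A,B}\ne0\Rightarrow A\ne0,B\neq0$). The signature of $z^A\bar z^B$ is $\mathrm{wt}\,A-\mathrm{wt}\,B$, and $p^{(\nu)}=\sum_{\mathrm{wt}A-\mathrm{wt}B=\nu}c_{A,B}z^A\bar z^B=\sum_B f_{\nu,B}(z)\bar z^B$ with $f_{\nu,B}$ holomorphic polynomials. $Q$ acts on polynomials in $z,\bar z$ by differentiation in $z$ only: $Q(f\bar z^B)=(Qf)\bar z^B$. An orbit of $Q$ is the image $\varphi(\mathcal{D})$ of an integral curve $\varphi:\mathcal{D}\to\mathbb{C}^n$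 ($\dot\varphi=Q(\varphi)$) on a maximal domain $\mathcal{D}\subset\mathbb{C}$. *)

theory Defs
  imports "HOL-Analysis.Analysis"
begin

definition delta :: "('n \<Rightarrow> nat) \<Rightarrow> 'n \<Rightarrow> real" where
  "delta m j = 1 / (2 * real (m j))"

definition wt :: "('n::finite \<Rightarrow> nat) \<Rightarrow> ('n \<Rightarrow> nat) \<Rightarrow> real" where
  "wt m A = (\<Sum>j\<in>UNIV. real (A j) * delta m j)"

definition monom :: "('n::finite \<Rightarrow> nat) \<Rightarrow> complex^'n \<Rightarrow> complex" where
  "monom A z = (\<Prod>j\<in>UNIV. (z $ j) ^ A j)"

definition hpoly :: "(('n::finite \<Rightarrow> nat) \<Rightarrow> complex) \<Rightarrow> complex^'n \<Rightarrow> complex" where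
  "hpoly c z = (\<Sum>A\<in>{A. c A \<noteq> 0}. c A * monom A z)"

definition vfield :: "('n::finite \<Rightarrow> ('n \<Rightarrow> nat) \<Rightarrow> complex) \<Rightarrow> complex^'n \<Rightarrow> complex^'n" where
  "vfield qc z = (\<chi> j. hpoly (qc j) z)"

text \<open>A polynomial in z, zbar is represented by a function F z w (holomorphic polynomial in
  (z,w)) evaluated at w = conj z.  Q acts by differentiating in z only.\<close>
definition Qop :: "('n::finite \<Rightarrow> ('n \<Rightarrow> nat) \<Rightarrow> complex)
    \<Rightarrow> (complex^'n \<Rightarrow> complex^'n \<Rightarrow> complex) \<Rightarrow> (complex^'n \<Rightarrow> complex^'n \<Rightarrow> complex)" where
  "Qop qc F = (\<lambda>z w. \<Sum>j\<in>UNIV. hpoly (qc j) z *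
        deriv (\<lambda>t. F (\<chi> k. if k = j then t else z $ k) w) (z $ j))"

definition cnjv :: "complex^'n \<Rightarrow> complex^'n" where
  "cnjv z = (\<chi> j. cnj (z $ j))"

definition pfun :: "(('n::finite \<Rightarrow> nat) \<Rightarrow> ('n \<Rightarrow> nat) \<Rightarrow> complex)
     \<Rightarrow> complex^'n \<Rightarrow> complex^'n \<Rightarrow> complex" where
  "pfun c z w = (\<Sum>(A,B)\<in>{(A,B). c A B \<noteq> 0}. c A B * monom A z * monom B w)"

definition psig :: "('n::finite \<Rightarrow> nat) \<Rightarrow> (('n \<Rightarrow> nat) \<Rightarrow> ('n \<Rightarrow> nat) \<Rightarrow> complex) \<Rightarrow> real
     \<Rightarrow> complex^'n \<Rightarrow> complex^'n \<Rightarrow> complex" where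
  "psig m c \<nu> z w = (\<Sum>(A,B)\<in>{(A,B). c A B \<noteq> 0 \<and> wt m A - wt m B = \<nu>}.
        c A B * monom A z * monom B w)"

definition integral_curve :: "('n::finite \<Rightarrow> ('n \<Rightarrow> nat) \<Rightarrow> complex)
    \<Rightarrow> (complex \<Rightarrow> complex^'n) \<Rightarrow> complex set \<Rightarrow> bool" where
  "integral_curve qc \<phi> D \<longleftrightarrow> open D \<and> connected D \<and> D \<noteq> {} \<and>
     (\<forall>t\<in>D. \<forall>j. ((\<lambda>s. \<phi> s $ j) has_field_derivative (vfield qc (\<phi> t) $ j)) (at t))"

definition maximal_integral_curve :: "('n::finite \<Rightarrow> ('n \<Rightarrow> nat) \<Rightarrow> complex)
    \<Rightarrow> (complex \<Rightarrow> complex^'n) \<Rightarrow> complex set \<Rightarrow> bool" where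
  "maximal_integral_curve qc \<phi> D \<longleftrightarrow> integral_curve qc \<phi> D \<and>
     (\<forall>\<psi> D'. D \<subseteq> D' \<and> integral_curve qc \<psi> D' \<and> (\<forall>t\<in>D. \<psi> t = \<phi> t) \<longrightarrow> D' = D)"

definition is_orbit :: "('n::finite \<Rightarrow> ('n \<Rightarrow> nat) \<Rightarrow> complex) \<Rightarrow> (complex^'n) set \<Rightarrow> bool" where
  "is_orbit qc S \<longleftrightarrow> (\<exists>\<phi> D. maximal_integral_curve qc \<phi> D \<and> S = \<phi> ` D)"

end

theory Submission
  imports Defs "HOL-Complex_Analysis.Conformal_Mappings"
begin

inductive pp :: "(complex^'n \<Rightarrow> complex^'n \<Rightarrow> complex) \<Rightarrow> bool" where
  pc: "pp (\<lambda>z w. a)"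
| pz: "pp (\<lambda>z w. z $ j)"
| pw: "pp (\<lambda>z w. w $ j)"
| padd: "pp f \<Longrightarrow> pp g \<Longrightarrow> pp (\<lambda>z w. f z w + g z w)"
| pmul: "pp f \<Longrightarrow> pp g \<Longrightarrow> pp (\<lambda>z w. f z w * g z w)"

lemma pp_sum: "(\<And>x. x \<in> I \<Longrightarrow> pp (f x)) \<Longrightarrow> pp (\<lambda>z w. \<Sum>x\<in>I. f x z w)"
proof (induction I rule: infinite_finite_induct)
  case (infinite A) then show ?case using pc by simp
next
  case empty then show ?case using pc by simp
next
  case (insert x F) then show ?case by (simp add: padd)
qed

lemma pp_prod: "(\<And>x. x \<in> I \<Longrightarrow> pp (f x)) \<Longrightarrow> pp (\<lambda>z w. \<Prod>x\<in>I. f x z w)"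
proof (induction I rule: infinite_finite_induct)
  case (infinite A) then show ?case using pc by simp
next
  case empty then show ?case using pc by simp
next
  case (insert x F) then show ?case by (simp add: pmul)
qed

lemma pp_pow: "pp f \<Longrightarrow> pp (\<lambda>z w. f z w ^ n)"
  by (induction n) (auto intro: pc pmul)

lemma pp_monz: "pp (\<lambda>z w. monom A z)"
  unfolding monom_def by (intro pp_prod pp_pow pz)

lemma pp_monw: "pp (\<lambda>z w. monom A w)"
  unfolding monom_def by (intro pp_prod pp_pow pw)

lemma pp_hpoly: "pp (\<lambda>z w. hpoly c z)"
  unfolding hpoly_def by (intro pp_sum pmul pc pp_monz)

lemma pp_psig: "pp (psig m c \<nu>)"
proof -
  have "pp (\<lambda>z w. \<Sum>x\<in>{(A,B). c A B \<noteq> 0 \<and> wt m A - wt m B = \<nu>}.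
        (\<lambda>z w. case x of (A,B) \<Rightarrow> c A B * monom A z * monom B w) z w)"
    apply (rule pp_sum)
    subgoal for x by (cases x) (simp, intro pmul pc pp_monz pp_monw)
    done
  then show ?thesis unfolding psig_def by (simp add: case_prod_unfold)
qed

definition pd :: "'n \<Rightarrow> (complex^'n \<Rightarrow> complex^'n \<Rightarrow> complex) \<Rightarrow> complex^'n \<Rightarrow> complex^'n \<Rightarrow> complex" where
  "pd j F z w = deriv (\<lambda>t. F (\<chi> k. if k = j then t else z $ k) w) (z $ j)"

lemma upd_same: "(\<chi> k. if k = j then z $ j else z $ k) = z"
  by (simp add: vec_eq_iff)

lemma pd_lemma: "pp H \<Longrightarrow> pp (pd j H) \<and>
   (\<forall>z w. ((\<lambda>t. H (\<chi> k. if k = j then t else z $ k) w) has_field_derivative pd j H z w) (at (z $ j)))"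
proof (induction rule: pp.induct)
  case (pc a)
  have "pd j (\<lambda>z w. a) = (\<lambda>z w. 0)" by (simp add: pd_def fun_eq_iff)
  then show ?case by (simp add: pp.pc)
next
  case (pz i)
  have d: "((\<lambda>t. (\<chi> k. if k = j then t else z $ k) $ i) has_field_derivative (if i = j then 1 else 0)) (at (z $ j))" for z
    by (cases "i = j") (auto intro!: derivative_eq_intros)
  have "pd j (\<lambda>z w. z $ i) = (\<lambda>z w. if i = j then 1 else 0)"
    using d by (auto simp: pd_def fun_eq_iff intro!: DERIV_imp_deriv)
  then show ?case using d by (simp add: pp.pc)
next
  case (pw i)
  have "pd j (\<lambda>z w. w $ i) = (\<lambda>z w. 0)" by (simp add: pd_def fun_eq_iff)
  then show ?case by (simp add: pp.pc)
next
  case (padd f g)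
  have d: "((\<lambda>t. f (\<chi> k. if k = j then t else z $ k) w + g (\<chi> k. if k = j then t else z $ k) w)
     has_field_derivative pd j f z w + pd j g z w) (at (z $ j))" for z w
    using padd.IH by (auto intro!: derivative_eq_intros)
  have "pd j (\<lambda>z w. f z w + g z w) = (\<lambda>z w. pd j f z w + pd j g z w)"
    using d by (auto simp: pd_def fun_eq_iff intro!: DERIV_imp_deriv)
  then show ?case using d padd.IH by (simp add: pp.padd)
next
  case (pmul f g)
  have d: "((\<lambda>t. f (\<chi> k. if k = j then t else z $ k) w * g (\<chi> k. if k = j then t else z $ k) w)
     has_field_derivative pd j f z w * g z w + f z w * pd j g z w) (at (z $ j))" for z w
    using pmul.IH by (auto intro!: derivative_eq_intros simp: upd_same)
  have e: "pd j (\<lambda>z w. f z w * g z w) = (\<lambda>z w. pd j f z w * g z w + f z w * pd j g z w)"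
    using d by (auto simp: pd_def fun_eq_iff intro!: DERIV_imp_deriv)
  have "pp (\<lambda>z w. pd j f z w * g z w + f z w * pd j g z w)"
    using pmul by (intro pp.padd pp.pmul) auto
  then show ?case using d e by simp
qed


lemma pd_pp: "pp H \<Longrightarrow> pp (pd j H)" using pd_lemma by blast
lemma pd_deriv: "pp H \<Longrightarrow> ((\<lambda>t. H (\<chi> k. if k = j then t else z $ k) w) has_field_derivative pd j H z w) (at (z $ j))"
  using pd_lemma by blast

lemma pd_eq: "pp H \<Longrightarrow> ((\<lambda>t. H (\<chi> k. if k = j then t else z $ k) w) has_field_derivative D) (at (z $ j)) \<Longrightarrow> pd j H z w = D"
  using pd_deriv DERIV_unique by blast

lemma pd_c: "pd j (\<lambda>z w. a) z w = 0" by (rule pd_eq) (auto intro: pp.pc)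
lemma pd_z: "pd j (\<lambda>z w. z $ i) z w = (if j = i then 1 else 0)"
  by (rule pd_eq) (auto intro: pp.pz intro!: derivative_eq_intros)
lemma pd_w: "pd j (\<lambda>z w. w $ i) z w = 0" by (rule pd_eq) (auto intro: pp.pw)
lemma pd_add: "pp f \<Longrightarrow> pp g \<Longrightarrow> pd j (\<lambda>z w. f z w + g z w) z w = pd j f z w + pd j g z w"
  by (rule pd_eq) (auto intro: pp.padd intro!: derivative_eq_intros pd_deriv)
lemma pd_mul: "pp f \<Longrightarrow> pp g \<Longrightarrow> pd j (\<lambda>z w. f z w * g z w) z w = pd j f z w * g z w + f z w * pd j g z w"
  by (rule pd_eq) (auto intro: pp.pmul intro!: derivative_eq_intros pd_deriv simp: upd_same)

lemma chain: "pp H \<Longrightarrow> (\<And>j. ((\<lambda>s. \<phi> s $ j) has_field_derivative \<phi>' j) (at t)) \<Longrightarrow>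
   ((\<lambda>s. H (\<phi> s) w) has_field_derivative (\<Sum>j\<in>UNIV. pd j H (\<phi> t) w * \<phi>' j)) (at t)"
proof (induction rule: pp.induct)
  case (pc a)
  then show ?case by (auto simp: pd_c intro!: derivative_eq_intros)
next
  case (pz i)
  then show ?case by (simp add: pd_z if_distrib[of "\<lambda>x. x * _"] cong: if_cong)
next
  case (pw i)
  then show ?case by (auto simp: pd_w intro!: derivative_eq_intros)
next
  case (padd f g)
  then show ?case by (auto intro!: derivative_eq_intros simp: pd_add sum.distrib algebra_simps)
next
  case (pmul f g)
  then show ?case by (auto intro!: derivative_eq_intros simp: pd_mul sum.distrib algebra_simps sum_distrib_left sum_distrib_right)
qed

lemma pp_cont: "pp H \<Longrightarrow> continuous_on UNIV (\<lambda>z. H z w)"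
  by (induction rule: pp.induct) (auto intro!: continuous_intros)

lemma pp_holo: "pp H \<Longrightarrow> (\<And>j. (\<lambda>t. u t $ j) holomorphic_on UNIV) \<Longrightarrow> (\<And>j. (\<lambda>t. v t $ j) holomorphic_on UNIV)
  \<Longrightarrow> (\<lambda>t. H (u t) (v t)) holomorphic_on UNIV"
  by (induction rule: pp.induct) (auto intro!: holomorphic_intros)

lemma Qop_eq: "Qop qc F = (\<lambda>z w. \<Sum>j\<in>UNIV. hpoly (qc j) z * pd j F z w)"
  by (simp add: Qop_def pd_def fun_eq_iff)

lemma pp_Qop: "pp F \<Longrightarrow> pp (Qop qc F)"
  unfolding Qop_eq by (intro pp_sum pmul pp_hpoly pd_pp)

lemma pp_Qpow: "pp F \<Longrightarrow> pp ((Qop qc ^^ k) F)"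
  by (induction k) (auto intro: pp_Qop)

lemma real_zero:
  assumes "f holomorphic_on UNIV" "\<And>x::real. f (complex_of_real x) = 0"
  shows "f w = 0"
proof (rule analytic_continuation[OF assms(1) open_UNIV connected_UNIV subset_UNIV UNIV_I, of 0 "range complex_of_real"])
  show "0 islimpt range complex_of_real"
    unfolding islimpt_approachable
  proof (intro allI impI)
    fix e :: real assume "e > 0"
    then show "\<exists>x'\<in>range complex_of_real. x' \<noteq> 0 \<and> dist x' 0 < e"
      by (intro bexI[of _ "complex_of_real (e/2)"]) (auto simp: dist_norm simp del: of_real_divide)
  qed
qed (use assms in auto)

lemma two_var:
  fixes g :: "complex \<Rightarrow> complex \<Rightarrow> complex"
  assumes h1: "\<And>y. (\<lambda>x. g (x + \<i>*y) (x - \<i>*y)) holomorphic_on UNIV"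
    and h2: "\<And>x. (\<lambda>y. g (x + \<i>*y) (x - \<i>*y)) holomorphic_on UNIV"
    and z: "\<And>a. g a (cnj a) = 0"
  shows "g a b = 0"
proof -
  have r: "g (of_real x + \<i> * of_real y) (of_real x - \<i> * of_real y) = 0" for x y :: real
    using z[of "of_real x + \<i> * of_real y"] by (simp add: complex_cnj_diff)
  have s: "g (x + \<i> * of_real y) (x - \<i> * of_real y) = 0" for x and y :: real
    by (rule real_zero[OF h1]) (rule r)
  have t: "g (x + \<i>*y) (x - \<i>*y) = 0" for x y
    by (rule real_zero[OF h2]) (rule s)
  have "g ((a+b)/2 + \<i>*((a-b)/(2*\<i>))) ((a+b)/2 - \<i>*((a-b)/(2*\<i>))) = 0" by (rule t)
  moreover have "(a+b)/2 + \<i>*((a-b)/(2*\<i>)) = a" "(a+b)/2 - \<i>*((a-b)/(2*\<i>)) = b"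
    by (auto simp: field_simps)
  ultimately show ?thesis by simp
qed


lemma upd_holo: "(\<lambda>x. (\<chi> k. if k = j then f x else z $ k) $ i) holomorphic_on UNIV"
  if "f holomorphic_on UNIV" for f :: "complex \<Rightarrow> complex"
  using that by (cases "i = j") (auto intro!: holomorphic_intros)

lemma totreal:
  fixes H :: "complex^'n \<Rightarrow> complex^'n \<Rightarrow> complex"
  assumes H: "pp H" and d: "\<forall>z. H z (cnjv z) = 0"
  shows "H z w = 0"
proof -
  have "finite J \<Longrightarrow> \<forall>z w. (\<forall>j. j \<notin> J \<longrightarrow> w $ j = cnj (z $ j)) \<longrightarrow> H z w = 0" for J :: "'n set"
  proof (induction J rule: finite_induct)
    case empty
    show ?case
    proof (intro allI impI)
      fix z w :: "complex^'n" assume "\<forall>j. j \<notin> {} \<longrightarrow> w $ j = cnj (z $ j)"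
      then have "w = cnjv z" by (simp add: vec_eq_iff cnjv_def)
      then show "H z w = 0" using d by simp
    qed
  next
    case (insert j J)
    show ?case
    proof (intro allI impI)
      fix z w :: "complex^'n" assume c: "\<forall>i. i \<notin> insert j J \<longrightarrow> w $ i = cnj (z $ i)"
      define g where "g a b = H (\<chi> k. if k = j then a else z $ k) (\<chi> k. if k = j then b else w $ k)" for a b
      have "g a b = 0" for a b
      proof (rule two_var[of g])
        show "g a (cnj a) = 0" for a
          unfolding g_def using insert.IH c by auto
        show "(\<lambda>x. g (x + \<i> * y) (x - \<i> * y)) holomorphic_on UNIV" for y
          unfolding g_def by (intro pp_holo[OF H] upd_holo holomorphic_intros)
        show "(\<lambda>y. g (x + \<i> * y) (x - \<i> * y)) holomorphic_on UNIV" for x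
          unfolding g_def by (intro pp_holo[OF H] upd_holo holomorphic_intros)
      qed
      from this[of "z $ j" "w $ j"] show "H z w = 0" by (simp add: g_def upd_same)
    qed
  qed
  then show ?thesis by auto
qed

theorem lemma2p3:
  fixes m :: "'n::finite \<Rightarrow> nat"
    and c :: "('n \<Rightarrow> nat) \<Rightarrow> ('n \<Rightarrow> nat) \<Rightarrow> complex"
    and qc :: "'n \<Rightarrow> ('n \<Rightarrow> nat) \<Rightarrow> complex"
    and S :: "(complex^'n) set"
    and \<nu> :: real and \<alpha> :: nat
  assumes m_pos: "\<forall>j. m j > 0"
    and p_fin: "finite {(A,B). c A B \<noteq> 0}"
    and p_real: "\<forall>z. Im (pfun c z (cnjv z)) = 0"
    and p_hom: "\<forall>A B. c A B \<noteq> 0 \<longrightarrow> wt m A + wt m B = 1"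
    and p_mixed: "\<forall>A B. c A B \<noteq> 0 \<longrightarrow> A \<noteq> (\<lambda>_. 0) \<and> B \<noteq> (\<lambda>_. 0)"
    and Q_fin: "\<forall>j. finite {A. qc j A \<noteq> 0}"
    and Q_hom: "\<exists>\<mu>::real. \<forall>j A. qc j A \<noteq> 0 \<longrightarrow> wt m A = \<mu> - delta m j"
    and Q_zero: "vfield qc 0 = 0"
    and orbit: "is_orbit qc S"
    and nontriv: "\<exists>x\<in>S. \<exists>y\<in>S. x \<noteq> y"
    and zero_cl: "0 \<in> closure S"
    and Q_nz: "\<forall>x\<in>S. vfield qc x \<noteq> 0"
    and alpha_pos: "\<alpha> > 0"
    and annihil: "\<forall>z. (Qop qc ^^ \<alpha>) (psig m c \<nu>) z (cnjv z) = 0"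
  shows "\<forall>z\<in>S. psig m c \<nu> z (cnjv z) = 0"
proof -
  obtain \<phi> D where mic: "maximal_integral_curve qc \<phi> D" and S: "S = \<phi> ` D"
    using orbit is_orbit_def by blast
  then have ic: "integral_curve qc \<phi> D" by (simp add: maximal_integral_curve_def)
  then have oD: "open D" "connected D"
    and der: "\<And>t j. t \<in> D \<Longrightarrow> ((\<lambda>s. \<phi> s $ j) has_field_derivative (vfield qc (\<phi> t) $ j)) (at t)"
    by (auto simp: integral_curve_def)
  define G where "G k = (Qop qc ^^ k) (psig m c \<nu>)" for k
  have ppG: "pp (G k)" for k unfolding G_def by (intro pp_Qpow pp_psig)
  have mon0: "monom A (0::complex^'n) = 0" if nz: "A \<noteq> (\<lambda>_. 0)" for A
  proof -
    obtain j where "A j \<noteq> 0" using nz by (metis ext)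
    then show ?thesis unfolding monom_def by (intro prod_zero) auto
  qed
  have G0: "G k 0 w = 0" for k w
  proof (cases k)
    case 0
    have "psig m c \<nu> 0 w = 0"
      unfolding psig_def by (intro sum.neutral) (use p_mixed mon0 in auto)
    then show ?thesis using 0 by (simp add: G_def)
  next
    case (Suc k')
    have "hpoly (qc j) 0 = 0" for j
      using Q_zero by (metis vfield_def vec_lambda_beta zero_index)
    then show ?thesis using Suc by (simp add: G_def Qop_eq)
  qed
  have Ga: "G \<alpha> z w = 0" for z w
    using totreal[OF ppG] annihil by (simp add: G_def)
  have main: "\<forall>t\<in>D. \<forall>w. G (\<alpha> - i) (\<phi> t) w = 0" for i
  proof (induction i)
    case 0 then show ?case using Ga by simp
  next
    case (Suc i)
    show ?case
    proof (cases "\<alpha> - Suc i = \<alpha> - i")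
      case True then show ?thesis using Suc by simp
    next
      case False
      define k where "k = \<alpha> - Suc i"
      have k1: "Suc k = \<alpha> - i" using False unfolding k_def by simp
      show ?thesis unfolding k_def[symmetric]
      proof (intro ballI allI)
        fix t0 w assume t0: "t0 \<in> D"
        define f where "f s = G k (\<phi> s) w" for s
        have fd: "(f has_field_derivative 0) (at t)" if t: "t \<in> D" for t
        proof -
          have "(f has_field_derivative (\<Sum>j\<in>UNIV. pd j (G k) (\<phi> t) w * (vfield qc (\<phi> t) $ j))) (at t)"
            unfolding f_def by (rule chain[OF ppG der[OF t]])
          moreover have "(\<Sum>j\<in>UNIV. pd j (G k) (\<phi> t) w * (vfield qc (\<phi> t) $ j)) = G (Suc k) (\<phi> t) w"
            by (simp add: G_def Qop_eq vfield_def mult.commute)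
          moreover have "G (Suc k) (\<phi> t) w = 0" using Suc.IH t k1 by simp
          ultimately show ?thesis by simp
        qed
        have "continuous_on D f"
          using fd by (meson DERIV_isCont continuous_at_imp_continuous_on)
        then obtain cc where cc: "\<And>x. x \<in> D \<Longrightarrow> f x = cc"
          using DERIV_zero_connected_constant[OF oD(2) oD(1) finite.emptyI] fd by blast
        have "G k 0 w = cc"
        proof (rule continuous_constant_on_closure[where S = S and f = "\<lambda>z. G k z w"])
          show "continuous_on (closure S) (\<lambda>z. G k z w)"
            using pp_cont[OF ppG] continuous_on_subset by blast
          show "\<And>x. x \<in> S \<Longrightarrow> G k x w = cc" using cc S f_def by auto
        qed (rule zero_cl)
        then show "G k (\<phi> t0) w = 0" using cc[OF t0] G0 f_def by simp
      qed
    qed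
  qed
  show ?thesis
  proof
    fix z assume "z \<in> S"
    then obtain t where "t \<in> D" "z = \<phi> t" using S by auto
    then show "psig m c \<nu> z (cnjv z) = 0" using main[of \<alpha>] by (simp add: G_def)
  qed
qed

end
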